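(* Let $\gamma>0$, $b>0$, $c>0$, $u_{1max}>0$, $u_{2max}>0$, $i_0\in[0,1]$, and let $\beta$ be a bounded nonnegative (measurable) function of time. For a deadline $T>0$, consider minimizing $J(u_1,u_2)=-1+s(T)+\int_0^T (b u_1^2(t)+c u_2^2(t))\,dt$ over Lebesgue integrable $u_1,u_2$ with $0\le u_1(t)\le u_{1max}$, $0\le u_2(t)\le u_{2max}$, subject to $$\dot s = -(\beta+u_2)\, s(1-s-r) - u_1 s,\qquad \dot r=\gamma(1-s-r),\qquad s(0)=1-i_0,\ r(0)=0,\ 0\le s,r\le 1.$$ The optimality system (from Pontryagin's Maximum Principle) consists of these state equations together with the adjoint equations $$\dot\lambda_s = \beta\lambda_s - 2\beta\lambda_s s - \beta\lambda_s r + \lambda_s u_1 + \lambda_s u_2 - 2\lambda_s u_2 s - \lambda_s u_2 r + \gamma\lambda_r,$$ $$\dot\lambda_r = -\beta\lambda_s s + \lambda_s u_2 s + \gamma\lambda_r,$$ with $\lambda_s(T)=-1$, $\lambda_r(T)=0$, and the control characterizations $$u_1=\min\Big\{\max\Big\{\tfrac{\lambda_s s}{-2b},0\Big\},u_{1max}\Big\},\qquad u_2=\min\Big\{\max\Big\{\tfrac{\lambda_s s(1-2s-r)}{-2c},0\Big\},u_{2max}\Big\}$$ (all quantities evaluated at time $t$). Then for a sufficiently small campaign deadline $T$, the state and adjoint trajectories $(s,r,\lambda_s,\lambda_r)$ at the optimum (i.e. the solution of this optimality system) and the optimal controls $(u_1,u_2)$ are unique.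
   Context: Controlled SIR information epidemic: $s,r$ are the fractions of susceptible and recovered individuals (infected fraction $1-s-r$), $\beta(t)$ the effective spreading rate, $\gamma$ the recovery rate, $u_1$ the direct recruitment control, $u_2$ the word-of-mouth control, and $\lambda_s,\lambda_r$ the adjoint variables. *)

theory Defs
  imports "HOL-Analysis.Analysis"
begin

definition s_rhs :: "(real \<Rightarrow> real) \<Rightarrow> real \<Rightarrow> real \<Rightarrow> real \<Rightarrow> real \<Rightarrow> real \<Rightarrow> real" where
  "s_rhs \<beta> t s r u1 u2 = - (\<beta> t + u2) * s * (1 - s - r) - u1 * s"

definition r_rhs :: "real \<Rightarrow> real \<Rightarrow> real \<Rightarrow> real" where
  "r_rhs \<gamma> s r = \<gamma> * (1 - s - r)"

definition ls_rhs :: "(real \<Rightarrow> real) \<Rightarrow> real \<Rightarrow> real \<Rightarrow> real \<Rightarrow> real \<Rightarrow> real \<Rightarrow> real \<Rightarrow> real \<Rightarrow> real \<Rightarrow> real" where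
  "ls_rhs \<beta> \<gamma> t s r ls lr u1 u2 =
     \<beta> t * ls - 2 * \<beta> t * ls * s - \<beta> t * ls * r + ls * u1 + ls * u2
     - 2 * ls * u2 * s - ls * u2 * r + \<gamma> * lr"

definition lr_rhs :: "(real \<Rightarrow> real) \<Rightarrow> real \<Rightarrow> real \<Rightarrow> real \<Rightarrow> real \<Rightarrow> real \<Rightarrow> real \<Rightarrow> real" where
  "lr_rhs \<beta> \<gamma> t s ls lr u2 = - \<beta> t * ls * s + ls * u2 * s + \<gamma> * lr"

text \<open>Since \<beta> is only measurable, the ODEs are
  understood in the Caratheodory sense, i.e. as integral equations with integrable
  right-hand sides (state equations integrated from 0, adjoint equations from T).\<close>

definition optimality_system ::
  "(real \<Rightarrow> real) \<Rightarrow> real \<Rightarrow> real \<Rightarrow> real \<Rightarrow> real \<Rightarrow> real \<Rightarrow> real \<Rightarrow> real \<Rightarrow>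
   (real \<Rightarrow> real) \<Rightarrow> (real \<Rightarrow> real) \<Rightarrow> (real \<Rightarrow> real) \<Rightarrow> (real \<Rightarrow> real) \<Rightarrow>
   (real \<Rightarrow> real) \<Rightarrow> (real \<Rightarrow> real) \<Rightarrow> bool" where
  "optimality_system \<beta> \<gamma> b c u1max u2max i0 T s r ls lr u1 u2 \<longleftrightarrow>
     (\<forall>t\<in>{0..T}. 0 \<le> s t \<and> s t \<le> 1 \<and> 0 \<le> r t \<and> r t \<le> 1) \<and>
     (\<forall>t\<in>{0..T}. u1 t = min (max (ls t * s t / (- 2 * b)) 0) u1max) \<and>
     (\<forall>t\<in>{0..T}. u2 t = min (max (ls t * s t * (1 - 2 * s t - r t) / (- 2 * c)) 0) u2max) \<and>
     set_integrable lborel {0..T} (\<lambda>\<tau>. s_rhs \<beta> \<tau> (s \<tau>) (r \<tau>) (u1 \<tau>) (u2 \<tau>)) \<and>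
     set_integrable lborel {0..T} (\<lambda>\<tau>. r_rhs \<gamma> (s \<tau>) (r \<tau>)) \<and>
     set_integrable lborel {0..T} (\<lambda>\<tau>. ls_rhs \<beta> \<gamma> \<tau> (s \<tau>) (r \<tau>) (ls \<tau>) (lr \<tau>) (u1 \<tau>) (u2 \<tau>)) \<and>
     set_integrable lborel {0..T} (\<lambda>\<tau>. lr_rhs \<beta> \<gamma> \<tau> (s \<tau>) (ls \<tau>) (lr \<tau>) (u2 \<tau>)) \<and>
     (\<forall>t\<in>{0..T}. s t = (1 - i0) + (LBINT \<tau>=0..t. s_rhs \<beta> \<tau> (s \<tau>) (r \<tau>) (u1 \<tau>) (u2 \<tau>))) \<and>
     (\<forall>t\<in>{0..T}. r t = 0 + (LBINT \<tau>=0..t. r_rhs \<gamma> (s \<tau>) (r \<tau>))) \<and>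
     (\<forall>t\<in>{0..T}. ls t = -1 - (LBINT \<tau>=t..T. ls_rhs \<beta> \<gamma> \<tau> (s \<tau>) (r \<tau>) (ls \<tau>) (lr \<tau>) (u1 \<tau>) (u2 \<tau>))) \<and>
     (\<forall>t\<in>{0..T}. lr t = 0 - (LBINT \<tau>=t..T. lr_rhs \<beta> \<gamma> \<tau> (s \<tau>) (ls \<tau>) (lr \<tau>) (u2 \<tau>)))"

end

theory Submission
  imports Defs
begin


lemma int_sub_le:
  fixes f :: "real \<Rightarrow> real"
  assumes f: "set_integrable lborel {0..T} f" and "0 \<le> a" "a \<le> b" "b \<le> T"
  shows "\<bar>LBINT \<tau>=a..b. f \<tau>\<bar> \<le> (LINT \<tau>:{0..T}|lborel. \<bar>f \<tau>\<bar>)"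
proof -
  have fab: "set_integrable lborel {a..b} f"
    by (rule set_integrable_subset[OF f]) (use assms in auto)
  have "\<bar>LBINT \<tau>=a..b. f \<tau>\<bar> = \<bar>LINT \<tau>:{a..b}|lborel. f \<tau>\<bar>"
    using assms by (simp add: interval_integral_Icc)
  also have "\<dots> \<le> (LINT \<tau>:{a..b}|lborel. \<bar>f \<tau>\<bar>)"
    using set_integral_norm_bound[OF fab] by simp
  also have "\<dots> \<le> (LINT \<tau>:{0..T}|lborel. \<bar>f \<tau>\<bar>)"
    unfolding set_lebesgue_integral_def
  proof (rule integral_mono)
    show "integrable lborel (\<lambda>x. indicator {a..b} x *\<^sub>R \<bar>f x\<bar>)"
      using set_integrable_abs[OF fab] unfolding set_integrable_def .
    show "integrable lborel (\<lambda>x. indicator {0..T} x *\<^sub>R \<bar>f x\<bar>)"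
      using set_integrable_abs[OF f] unfolding set_integrable_def .
    fix x show "indicator {a..b} x *\<^sub>R \<bar>f x\<bar> \<le> indicator {0..T} x *\<^sub>R \<bar>f x\<bar>"
      using assms by (auto split: split_indicator)
  qed
  finally show ?thesis .
qed

lemma int_diff_le:
  fixes f g :: "real \<Rightarrow> real"
  assumes f: "set_integrable lborel {0..T} f" and g: "set_integrable lborel {0..T} g"
    and bd: "\<forall>\<tau>\<in>{0..T}. \<bar>f \<tau> - g \<tau>\<bar> \<le> C" and "0 \<le> a" "a \<le> b" "b \<le> T"
  shows "\<bar>(LBINT \<tau>=a..b. f \<tau>) - (LBINT \<tau>=a..b. g \<tau>)\<bar> \<le> C * T"
proof -
  have fab: "set_integrable lborel {a..b} f"
    by (rule set_integrable_subset[OF f]) (use assms in auto)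
  have gab: "set_integrable lborel {a..b} g"
    by (rule set_integrable_subset[OF g]) (use assms in auto)
  have C0: "0 \<le> C" using bd assms by (metis abs_ge_zero atLeastAtMost_iff order.trans order_refl)
  have hab: "set_integrable lborel {a..b} (\<lambda>\<tau>. f \<tau> - g \<tau>)" using fab gab by auto
  have "\<bar>(LBINT \<tau>=a..b. f \<tau>) - (LBINT \<tau>=a..b. g \<tau>)\<bar> = \<bar>LINT \<tau>:{a..b}|lborel. f \<tau> - g \<tau>\<bar>"
    using assms fab gab by (simp add: interval_integral_Icc set_integral_diff)
  also have "\<dots> \<le> (LINT \<tau>:{a..b}|lborel. \<bar>f \<tau> - g \<tau>\<bar>)"
    using set_integral_norm_bound[OF hab] by simp
  also have "\<dots> \<le> (LINT \<tau>:{a..b}|lborel. C)"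
    by (rule set_integral_mono[OF set_integrable_abs[OF hab]])
       (use bd assms in \<open>auto intro!: borel_integrable_atLeastAtMost' continuous_intros\<close>)
  also have "\<dots> = (b - a) * C"
    using assms by (simp add: set_integral_const)
  also have "\<dots> \<le> C * T" using assms C0 by (simp add: mult.commute mult_left_mono)
  finally show ?thesis .
qed



lemma pd:
  fixes a b a' b' A Bb :: real
  assumes "\<bar>a\<bar> \<le> A" "\<bar>b'\<bar> \<le> Bb"
  shows "\<bar>a*b - a'*b'\<bar> \<le> A*\<bar>b-b'\<bar> + Bb*\<bar>a-a'\<bar>"
proof -
  have "a*b - a'*b' = a*(b-b') + b'*(a-a')" by (simp add: algebra_simps)
  hence "\<bar>a*b - a'*b'\<bar> \<le> \<bar>a\<bar>*\<bar>b-b'\<bar> + \<bar>b'\<bar>*\<bar>a-a'\<bar>"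
    by (metis abs_mult abs_triangle_ineq)
  also have "\<dots> \<le> A*\<bar>b-b'\<bar> + Bb*\<bar>a-a'\<bar>"
    using assms by (intro add_mono mult_right_mono) auto
  finally show ?thesis .
qed

lemma bm:
  fixes x y X Y :: real
  assumes "\<bar>x\<bar> \<le> X" "\<bar>y\<bar> \<le> Y"
  shows "\<bar>x*y\<bar> \<le> X*Y"
  using assms by (simp add: abs_mult mult_mono')

lemma clamp_lip:
  fixes x y U :: real
  shows "\<bar>min (max x 0) U - min (max y 0) U\<bar> \<le> \<bar>x - y\<bar>"
  by (auto simp: min_def max_def abs_if)

lemma lam_rhs_bound:
  fixes \<beta> :: "real \<Rightarrow> real" and B U1 U2 g s r l m u v t :: real
  assumes "0 \<le> \<beta> t" "\<beta> t \<le> B" "0 \<le> s" "s \<le> 1" "0 \<le> r" "r \<le> 1"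
    "0 \<le> u" "u \<le> U1" "0 \<le> v" "v \<le> U2" "0 < g"
  shows "\<bar>ls_rhs \<beta> g t s r l m u v\<bar> \<le> (3*B+U1+3*U2+g) * (\<bar>l\<bar>+\<bar>m\<bar>)"
    and "\<bar>lr_rhs \<beta> g t s l m v\<bar> \<le> (3*B+U1+3*U2+g) * (\<bar>l\<bar>+\<bar>m\<bar>)"
proof -
  define w where "w = 1 - 2 * s - r"
  define q where "q = \<beta> t * w + u + v * w"
  define h where "h = s * (v - \<beta> t)"
  define K where "K = 3*B+U1+3*U2+g"
  have w: "\<bar>w\<bar> \<le> 2" using assms unfolding w_def by auto
  have bw: "\<bar>\<beta> t * w\<bar> \<le> B * 2" by (rule bm) (use assms w in auto)
  have vw: "\<bar>v * w\<bar> \<le> U2 * 2" by (rule bm) (use assms w in auto)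
  have q: "\<bar>q\<bar> \<le> 2*B+U1+2*U2" using bw vw assms unfolding q_def by auto
  have hb: "\<bar>h\<bar> \<le> 1 * (U2 + B)" unfolding h_def by (rule bm) (use assms in auto)
  have e1: "ls_rhs \<beta> g t s r l m u v = l*q + g*m"
    unfolding ls_rhs_def q_def w_def by (simp add: algebra_simps)
  have e2: "lr_rhs \<beta> g t s l m v = l*h + g*m"
    unfolding lr_rhs_def h_def by (simp add: algebra_simps)
  have lq: "\<bar>l*q\<bar> \<le> \<bar>l\<bar> * K"
    by (rule bm) (use q assms in \<open>auto simp: K_def\<close>)
  have lh: "\<bar>l*h\<bar> \<le> \<bar>l\<bar> * K"
    by (rule bm) (use hb assms in \<open>auto simp: K_def\<close>)
  have gm: "\<bar>g*m\<bar> \<le> K * \<bar>m\<bar>"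
    by (rule bm) (use assms in \<open>auto simp: K_def\<close>)
  have dist: "K * (\<bar>l\<bar>+\<bar>m\<bar>) = \<bar>l\<bar>*K + K*\<bar>m\<bar>" by (simp add: algebra_simps)
  show "\<bar>ls_rhs \<beta> g t s r l m u v\<bar> \<le> (3*B+U1+3*U2+g) * (\<bar>l\<bar>+\<bar>m\<bar>)"
    using e1 lq gm dist unfolding K_def[symmetric] by (smt (verit) abs_triangle_ineq)
  show "\<bar>lr_rhs \<beta> g t s l m v\<bar> \<le> (3*B+U1+3*U2+g) * (\<bar>l\<bar>+\<bar>m\<bar>)"
    using e2 lh gm dist unfolding K_def[symmetric] by (smt (verit) abs_triangle_ineq)
qed



lemma ctrl_lip:
  fixes b c U1 U2 s r l s' r' l' e :: real
  assumes "0 \<le> s" "s \<le> 1" "0 \<le> r" "r \<le> 1" "0 \<le> s'" "s' \<le> 1" "0 \<le> r'" "r' \<le> 1"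
    "\<bar>l\<bar> \<le> 2" "\<bar>l'\<bar> \<le> 2" "b > 0" "c > 0"
    "\<bar>s - s'\<bar> + \<bar>r - r'\<bar> + \<bar>l - l'\<bar> \<le> e"
  shows "\<bar>min (max (l * s / (- 2 * b)) 0) U1 - min (max (l' * s' / (- 2 * b)) 0) U1\<bar> \<le> (1/b) * e"
    and "\<bar>min (max (l * s * (1 - 2 * s - r) / (- 2 * c)) 0) U2
          - min (max (l' * s' * (1 - 2 * s' - r') / (- 2 * c)) 0) U2\<bar> \<le> (4/c) * e"
proof -
  have ls: "\<bar>l * s - l' * s'\<bar> \<le> 2 * \<bar>s - s'\<bar> + 1 * \<bar>l - l'\<bar>"
    by (rule pd) (use assms in auto)
  have ls2: "\<bar>l * s\<bar> \<le> 2 * 1" by (rule bm) (use assms in auto)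
  have lsw: "\<bar>l * s * (1 - 2 * s - r) - l' * s' * (1 - 2 * s' - r')\<bar>
     \<le> 2 * \<bar>(1 - 2 * s - r) - (1 - 2 * s' - r')\<bar> + 2 * \<bar>l * s - l' * s'\<bar>"
    by (rule pd) (use assms ls2 in auto)
  have ls2e: "\<bar>l * s - l' * s'\<bar> \<le> 2 * e"
    using assms(13) ls abs_ge_zero[of "r - r'"] abs_ge_zero[of "l - l'"] by (smt (verit))
  have dw: "\<bar>(1 - 2 * s - r) - (1 - 2 * s' - r')\<bar> \<le> 2 * \<bar>s - s'\<bar> + \<bar>r - r'\<bar>"
    by (auto simp: abs_if)
  have l8: "\<bar>l * s * (1 - 2 * s - r) - l' * s' * (1 - 2 * s' - r')\<bar> \<le> 8 * e"
    using assms(13) ls lsw dw abs_ge_zero[of "r - r'"] abs_ge_zero[of "l - l'"] abs_ge_zero[of "s - s'"] by linarith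
  have "\<bar>min (max (l * s / (- 2 * b)) 0) U1 - min (max (l' * s' / (- 2 * b)) 0) U1\<bar>
      \<le> \<bar>l * s / (- 2 * b) - l' * s' / (- 2 * b)\<bar>" by (rule clamp_lip)
  also have "\<dots> = \<bar>l * s - l' * s'\<bar> / (2 * b)"
    using assms by (simp add: diff_divide_distrib[symmetric] abs_divide)
  also have "\<dots> \<le> (2 * e) / (2 * b)"
    using assms ls2e by (intro divide_right_mono) auto
  also have "\<dots> = (1/b) * e" using assms by simp
  finally show "\<bar>min (max (l * s / (- 2 * b)) 0) U1 - min (max (l' * s' / (- 2 * b)) 0) U1\<bar> \<le> (1/b) * e" .
  have "\<bar>min (max (l * s * (1 - 2 * s - r) / (- 2 * c)) 0) U2
          - min (max (l' * s' * (1 - 2 * s' - r') / (- 2 * c)) 0) U2\<bar>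
      \<le> \<bar>l * s * (1 - 2 * s - r) / (- 2 * c) - l' * s' * (1 - 2 * s' - r') / (- 2 * c)\<bar>" by (rule clamp_lip)
  also have "\<dots> = \<bar>l * s * (1 - 2 * s - r) - l' * s' * (1 - 2 * s' - r')\<bar> / (2 * c)"
    using assms by (simp add: diff_divide_distrib[symmetric] abs_divide)
  also have "\<dots> \<le> (8 * e) / (2 * c)"
    using assms l8 by (intro divide_right_mono) auto
  also have "\<dots> = (4/c) * e" using assms by simp
  finally show "\<bar>min (max (l * s * (1 - 2 * s - r) / (- 2 * c)) 0) U2
          - min (max (l' * s' * (1 - 2 * s' - r') / (- 2 * c)) 0) U2\<bar> \<le> (4/c) * e" .
qed

lemma rhs_lip:
  fixes \<beta> :: "real \<Rightarrow> real" and B U1 U2 g b c s r l m u v s' r' l' m' u' v' t e :: real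
  assumes "0 \<le> \<beta> t" "\<beta> t \<le> B" "0 \<le> s" "s \<le> 1" "0 \<le> r" "r \<le> 1"
    "0 \<le> s'" "s' \<le> 1" "0 \<le> r'" "r' \<le> 1"
    "0 \<le> u" "u \<le> U1" "0 \<le> v" "v \<le> U2" "0 \<le> u'" "u' \<le> U1" "0 \<le> v'" "v' \<le> U2"
    "\<bar>l\<bar> \<le> 2" "\<bar>l'\<bar> \<le> 2" "0 < g" "b > 0" "c > 0"
    and e: "e = \<bar>s - s'\<bar> + \<bar>r - r'\<bar> + \<bar>l - l'\<bar> + \<bar>m - m'\<bar>"
    and du: "\<bar>u - u'\<bar> \<le> (1/b) * e" and dv: "\<bar>v - v'\<bar> \<le> (4/c) * e"
  defines "L \<equiv> 20 * (B + U1 + U2 + g + 1/b + 1/c + 1)"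
  shows "\<bar>s_rhs \<beta> t s r u v - s_rhs \<beta> t s' r' u' v'\<bar> \<le> L * e"
    and "\<bar>r_rhs g s r - r_rhs g s' r'\<bar> \<le> L * e"
    and "\<bar>ls_rhs \<beta> g t s r l m u v - ls_rhs \<beta> g t s' r' l' m' u' v'\<bar> \<le> L * e"
    and "\<bar>lr_rhs \<beta> g t s l m v - lr_rhs \<beta> g t s' l' m' v'\<bar> \<le> L * e"
proof -
  have e0: "0 \<le> e" using e by simp
  have B0: "0 \<le> B" using assms by linarith
  have U10: "0 \<le> U1" "0 \<le> U2" using assms by linarith+
  have ds: "\<bar>s - s'\<bar> \<le> e" and dr: "\<bar>r - r'\<bar> \<le> e" and dl: "\<bar>l - l'\<bar> \<le> e" and dm: "\<bar>m - m'\<bar> \<le> e"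
    using e by auto
  have ib: "1/b \<ge> 0" "4/c \<ge> 0" "1/c \<ge> 0" using assms by auto
  have fc: "4/c = 4*(1/c)" "8/c = 8*(1/c)" "16/c = 16*(1/c)" "2/b = 2*(1/b)" by simp_all
  have Le: "L = 20*B + 20*U1 + 20*U2 + 20*g + 20*(1/b) + 20*(1/c) + 20" unfolding L_def by simp
  define p where "p = s * (1 - s - r)"
  define p' where "p' = s' * (1 - s' - r')"
  have a1: "\<bar>1 - s' - r'\<bar> \<le> 1" using assms(7-10) by (simp add: abs_le_iff)
  have p'b: "\<bar>p'\<bar> \<le> 1 * 1" unfolding p'_def by (rule bm) (use assms(7,8) a1 in auto)
  have dp: "\<bar>p - p'\<bar> \<le> 1 * \<bar>(1 - s - r) - (1 - s' - r')\<bar> + 1 * \<bar>s - s'\<bar>"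
    unfolding p_def p'_def by (rule pd) (use assms a1 in auto)
  have dsr: "\<bar>(1 - s - r) - (1 - s' - r')\<bar> \<le> \<bar>s - s'\<bar> + \<bar>r - r'\<bar>" by (auto simp: abs_if)
  have dp2: "\<bar>p - p'\<bar> \<le> 2 * e" using dp dsr e abs_ge_zero[of "r - r'"] abs_ge_zero[of "l - l'"] abs_ge_zero[of "m - m'"] by linarith
  have d1: "\<bar>(\<beta> t + v) * p - (\<beta> t + v') * p'\<bar> \<le> (B + U2) * \<bar>p - p'\<bar> + 1 * \<bar>(\<beta> t + v) - (\<beta> t + v')\<bar>"
    by (rule pd) (use assms p'b in auto)
  have d1b: "(B + U2) * \<bar>p - p'\<bar> \<le> (B + U2) * (2 * e)"
    using dp2 B0 U10 by (intro mult_left_mono) auto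
  have d2: "\<bar>u * s - u' * s'\<bar> \<le> U1 * \<bar>s - s'\<bar> + 1 * \<bar>u - u'\<bar>"
    by (rule pd) (use assms in auto)
  have d2b: "U1 * \<bar>s - s'\<bar> \<le> U1 * e" using ds U10 by (intro mult_left_mono) auto
  have srhs: "s_rhs \<beta> t s r u v - s_rhs \<beta> t s' r' u' v' = - ((\<beta> t + v) * p - (\<beta> t + v') * p') - (u * s - u' * s')"
    unfolding s_rhs_def p_def p'_def by (simp add: algebra_simps)
  have cs: "(B + U2) * (2 * e) + (4/c) * e + U1 * e + (1/b) * e = (2 * (B + U2) + 4/c + U1 + 1/b) * e"
    by (simp add: algebra_simps)
  have cs2: "(2 * (B + U2) + 4/c + U1 + 1/b) * e \<le> L * e"
    using e0 B0 U10 ib assms(21) by (intro mult_right_mono) (use fc Le ib B0 U10 e0 assms(21) in \<open>smt (verit)\<close>)+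
  show "\<bar>s_rhs \<beta> t s r u v - s_rhs \<beta> t s' r' u' v'\<bar> \<le> L * e"
    unfolding srhs using d1 d1b d2 d2b du dv cs cs2 by (smt (verit) abs_triangle_ineq abs_minus_cancel)
  have "r_rhs g s r - r_rhs g s' r' = g * ((s' - s) + (r' - r))" unfolding r_rhs_def by (simp add: algebra_simps)
  hence "\<bar>r_rhs g s r - r_rhs g s' r'\<bar> = g * \<bar>(s' - s) + (r' - r)\<bar>" using assms by (simp add: abs_mult)
  also have "\<dots> \<le> g * e" by (intro mult_left_mono) (use e assms(21) in \<open>smt (verit)\<close>)+
  also have "\<dots> \<le> L * e" using e0 B0 U10 ib by (intro mult_right_mono) (use fc Le ib B0 U10 e0 assms(21) in \<open>smt (verit)\<close>)+
  finally show "\<bar>r_rhs g s r - r_rhs g s' r'\<bar> \<le> L * e" .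
  define w where "w = 1 - 2 * s - r"
  define w' where "w' = 1 - 2 * s' - r'"
  define q where "q = \<beta> t * w + u + v * w"
  define q' where "q' = \<beta> t * w' + u' + v' * w'"
  have w'b: "\<bar>w'\<bar> \<le> 2" unfolding w'_def using assms(7-10) by (simp add: abs_le_iff)
  have dw: "\<bar>w - w'\<bar> \<le> 2 * e" unfolding w_def w'_def using e by (smt (verit))
  have bw'b: "\<bar>\<beta> t * w'\<bar> \<le> B * 2" by (rule bm) (use assms w'b in auto)
  have vw'b: "\<bar>v' * w'\<bar> \<le> U2 * 2" by (rule bm) (use assms w'b in auto)
  have q'b: "\<bar>q'\<bar> \<le> 2*B+U1+2*U2" using bw'b vw'b assms(15,16) unfolding q'_def by (smt (verit))
  have dbw: "\<bar>\<beta> t * w - \<beta> t * w'\<bar> \<le> B * \<bar>w - w'\<bar> + 2 * \<bar>\<beta> t - \<beta> t\<bar>"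
    by (rule pd) (use assms w'b in auto)
  have dbw2: "B * \<bar>w - w'\<bar> \<le> B * (2 * e)" using dw B0 by (intro mult_left_mono) auto
  have dvw: "\<bar>v * w - v' * w'\<bar> \<le> U2 * \<bar>w - w'\<bar> + 2 * \<bar>v - v'\<bar>"
    by (rule pd) (use assms w'b in auto)
  have dvw2: "U2 * \<bar>w - w'\<bar> \<le> U2 * (2 * e)" using dw U10 by (intro mult_left_mono) auto
  have dq: "\<bar>q - q'\<bar> \<le> (2*B + 2*U2 + 1/b + 8/c) * e"
  proof -
    have "\<bar>q - q'\<bar> \<le> \<bar>\<beta> t * w - \<beta> t * w'\<bar> + \<bar>u - u'\<bar> + \<bar>v * w - v' * w'\<bar>"
      unfolding q_def q'_def by (smt (verit) abs_triangle_ineq)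
    also have "\<dots> \<le> B * (2 * e) + (1/b) * e + (U2 * (2 * e) + 2 * ((4/c) * e))"
      using dbw dbw2 du dvw dvw2 dv by auto
    also have "\<dots> = (2*B + 2*U2 + 1/b + 8/c) * e" by (simp add: algebra_simps)
    finally show ?thesis .
  qed
  have dlq: "\<bar>l * q - l' * q'\<bar> \<le> 2 * \<bar>q - q'\<bar> + (2*B+U1+2*U2) * \<bar>l - l'\<bar>"
    by (rule pd) (use assms q'b in auto)
  have dlq2: "(2*B+U1+2*U2) * \<bar>l - l'\<bar> \<le> (2*B+U1+2*U2) * e"
    using dl B0 U10 by (intro mult_left_mono) auto
  have dgm: "\<bar>g * m - g * m'\<bar> \<le> g * e"
    using dm assms by (simp add: abs_mult right_diff_distrib[symmetric] mult_left_mono)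
  have lsr: "ls_rhs \<beta> g t s r l m u v - ls_rhs \<beta> g t s' r' l' m' u' v' = (l * q - l' * q') + (g * m - g * m')"
    unfolding ls_rhs_def q_def q'_def w_def w'_def by (simp add: algebra_simps)
  have cl: "2 * ((2*B + 2*U2 + 1/b + 8/c) * e) + (2*B+U1+2*U2) * e + g * e
      = (6*B + 6*U2 + U1 + 2/b + 16/c + g) * e" by (simp add: algebra_simps)
  have cl2: "(6*B + 6*U2 + U1 + 2/b + 16/c + g) * e \<le> L * e"
    using e0 B0 U10 ib assms(21) by (intro mult_right_mono) (use fc Le ib B0 U10 e0 assms(21) in \<open>smt (verit)\<close>)+
  show "\<bar>ls_rhs \<beta> g t s r l m u v - ls_rhs \<beta> g t s' r' l' m' u' v'\<bar> \<le> L * e"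
    unfolding lsr using dq dlq dlq2 dgm cl cl2 by (smt (verit) abs_triangle_ineq)
  define h where "h = s * (v - \<beta> t)"
  define h' where "h' = s' * (v' - \<beta> t)"
  have vbt: "\<bar>v' - \<beta> t\<bar> \<le> U2 + B" using assms(1,2,17,18) by (simp add: abs_le_iff)
  have h'b: "\<bar>h'\<bar> \<le> 1 * (U2 + B)" unfolding h'_def by (rule bm) (use assms(1,2,7,8,17,18) in \<open>auto simp: abs_le_iff\<close>)
  have dh: "\<bar>h - h'\<bar> \<le> 1 * \<bar>(v - \<beta> t) - (v' - \<beta> t)\<bar> + (U2 + B) * \<bar>s - s'\<bar>"
    unfolding h_def h'_def by (rule pd) (use assms vbt in auto)
  have dh2: "(U2 + B) * \<bar>s - s'\<bar> \<le> (U2 + B) * e" using ds B0 U10 by (intro mult_left_mono) auto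
  have dlh: "\<bar>l * h - l' * h'\<bar> \<le> 2 * \<bar>h - h'\<bar> + (U2 + B) * \<bar>l - l'\<bar>"
    by (rule pd) (use assms h'b in auto)
  have dlh2: "(U2 + B) * \<bar>l - l'\<bar> \<le> (U2 + B) * e" using dl B0 U10 by (intro mult_left_mono) auto
  have lrr: "lr_rhs \<beta> g t s l m v - lr_rhs \<beta> g t s' l' m' v' = (l * h - l' * h') + (g * m - g * m')"
    unfolding lr_rhs_def h_def h'_def by (simp add: algebra_simps)
  have ch: "2 * ((4/c) * e + (U2 + B) * e) + (U2 + B) * e + g * e = (8/c + 3*U2 + 3*B + g) * e"
    by (simp add: algebra_simps)
  have ch2: "(8/c + 3*U2 + 3*B + g) * e \<le> L * e"
    using e0 B0 U10 ib assms(21) by (intro mult_right_mono) (use fc Le ib B0 U10 e0 assms(21) in \<open>smt (verit)\<close>)+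
  show "\<bar>lr_rhs \<beta> g t s l m v - lr_rhs \<beta> g t s' l' m' v'\<bar> \<le> L * e"
    unfolding lrr using dh dh2 dv dlh dlh2 dgm ch ch2 by (smt (verit) abs_triangle_ineq)
qed



lemma rhs_lip_all:
  fixes \<beta> :: "real \<Rightarrow> real" and B U1 U2 g b c s r l m u v s' r' l' m' u' v' t e :: real
  assumes "0 \<le> \<beta> t" "\<beta> t \<le> B" "0 \<le> s" "s \<le> 1" "0 \<le> r" "r \<le> 1"
    "0 \<le> s'" "s' \<le> 1" "0 \<le> r'" "r' \<le> 1"
    "0 \<le> u" "u \<le> U1" "0 \<le> v" "v \<le> U2" "0 \<le> u'" "u' \<le> U1" "0 \<le> v'" "v' \<le> U2"
    "\<bar>l\<bar> \<le> 2" "\<bar>l'\<bar> \<le> 2" "0 < g" "b > 0" "c > 0"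
    "e = \<bar>s - s'\<bar> + \<bar>r - r'\<bar> + \<bar>l - l'\<bar> + \<bar>m - m'\<bar>"
    "\<bar>u - u'\<bar> \<le> (1/b) * e" "\<bar>v - v'\<bar> \<le> (4/c) * e"
  shows "\<bar>s_rhs \<beta> t s r u v - s_rhs \<beta> t s' r' u' v'\<bar> \<le> 20 * (B + U1 + U2 + g + 1/b + 1/c + 1) * e
    \<and> \<bar>r_rhs g s r - r_rhs g s' r'\<bar> \<le> 20 * (B + U1 + U2 + g + 1/b + 1/c + 1) * e
    \<and> \<bar>ls_rhs \<beta> g t s r l m u v - ls_rhs \<beta> g t s' r' l' m' u' v'\<bar> \<le> 20 * (B + U1 + U2 + g + 1/b + 1/c + 1) * e
    \<and> \<bar>lr_rhs \<beta> g t s l m v - lr_rhs \<beta> g t s' l' m' v'\<bar> \<le> 20 * (B + U1 + U2 + g + 1/b + 1/c + 1) * e"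
  using rhs_lip[where \<beta>=\<beta> and t=t, OF assms] by (intro conjI)

lemma int_diff_le0:
  fixes f g :: "real \<Rightarrow> real"
  assumes f: "set_integrable lborel {0..T} f" and g: "set_integrable lborel {0..T} g"
    and bd: "\<forall>\<tau>\<in>{0..T}. \<bar>f \<tau> - g \<tau>\<bar> \<le> C" and "0 \<le> b" "b \<le> T"
  shows "\<bar>(LBINT \<tau>=0..b. f \<tau>) - (LBINT \<tau>=0..b. g \<tau>)\<bar> \<le> C * T"
  using int_diff_le[OF f g bd, of 0 b] assms unfolding zero_ereal_def by simp

lemma h1: fixes a x k :: real shows "a = -1 - x \<Longrightarrow> \<bar>x\<bar> \<le> k \<Longrightarrow> \<bar>a\<bar> \<le> 1 + k" by auto
lemma h0: fixes a x k :: real shows "a = 0 - x \<Longrightarrow> \<bar>x\<bar> \<le> k \<Longrightarrow> \<bar>a\<bar> \<le> k" by auto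

lemma int_le:
  fixes f :: "real \<Rightarrow> real"
  assumes f: "set_integrable lborel {0..T} f"
    and bd: "\<forall>\<tau>\<in>{0..T}. \<bar>f \<tau>\<bar> \<le> C" and "0 \<le> a" "a \<le> b" "b \<le> T"
  shows "\<bar>LBINT \<tau>=a..b. f \<tau>\<bar> \<le> C * T"
  using int_diff_le[OF f _ _ assms(3-5), of "\<lambda>_. 0" C] bd by (simp add: set_integrable_def)

lemma ctrl_bounds:
  assumes "optimality_system \<beta> \<gamma> b c u1max u2max i0 T s r ls lr u1 u2" "u1max > 0" "u2max > 0"
  shows "\<forall>t\<in>{0..T}. 0 \<le> u1 t \<and> u1 t \<le> u1max \<and> 0 \<le> u2 t \<and> u2 t \<le> u2max"
proof
  fix t assume t: "t \<in> {0..T}"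
  have "u1 t = min (max (ls t * s t / (- 2 * b)) 0) u1max" "u2 t = min (max (ls t * s t * (1 - 2 * s t - r t) / (- 2 * c)) 0) u2max"
    using assms(1) t unfolding optimality_system_def by blast+
  thus "0 \<le> u1 t \<and> u1 t \<le> u1max \<and> 0 \<le> u2 t \<and> u2 t \<le> u2max"
    using assms(2,3) by (simp add: min_def max_def)
qed

lemma lam_bound:
  assumes os: "optimality_system \<beta> \<gamma> b c u1max u2max i0 T s r ls lr u1 u2"
    and g: "\<gamma> > 0" and U: "u1max > 0" "u2max > 0" and bB: "\<forall>t. 0 \<le> \<beta> t \<and> \<beta> t \<le> B"
    and T: "0 < T" "T * (3*B+u1max+3*u2max+\<gamma>) \<le> 1/4"
  shows "\<forall>t\<in>{0..T}. \<bar>ls t\<bar> \<le> 2 \<and> \<bar>lr t\<bar> \<le> 2"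
proof -
  define K where "K = 3*B+u1max+3*u2max+\<gamma>"
  define F where "F t = \<bar>ls t\<bar> + \<bar>lr t\<bar>" for t
  define fl where "fl \<tau> = ls_rhs \<beta> \<gamma> \<tau> (s \<tau>) (r \<tau>) (ls \<tau>) (lr \<tau>) (u1 \<tau>) (u2 \<tau>)" for \<tau>
  define fr where "fr \<tau> = lr_rhs \<beta> \<gamma> \<tau> (s \<tau>) (ls \<tau>) (lr \<tau>) (u2 \<tau>)" for \<tau>
  have B0: "0 \<le> B" using bB by (meson order.trans)
  have K0: "0 \<le> K" unfolding K_def using B0 U g by simp
  have ifl: "set_integrable lborel {0..T} fl" and ifr: "set_integrable lborel {0..T} fr"
    using os unfolding optimality_system_def fl_def fr_def by blast+
  have eql: "\<forall>t\<in>{0..T}. ls t = -1 - (LBINT \<tau>=t..T. fl \<tau>)"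
   and eqr: "\<forall>t\<in>{0..T}. lr t = 0 - (LBINT \<tau>=t..T. fr \<tau>)"
    using os unfolding optimality_system_def fl_def fr_def by blast+
  have sr: "\<forall>t\<in>{0..T}. 0 \<le> s t \<and> s t \<le> 1 \<and> 0 \<le> r t \<and> r t \<le> 1"
    using os unfolding optimality_system_def by blast
  have ub: "\<forall>t\<in>{0..T}. 0 \<le> u1 t \<and> u1 t \<le> u1max \<and> 0 \<le> u2 t \<and> u2 t \<le> u2max"
    by (rule ctrl_bounds[OF os U])
  have bdd: "F t \<le> 1 + (LINT \<tau>:{0..T}|lborel. \<bar>fl \<tau>\<bar>) + (LINT \<tau>:{0..T}|lborel. \<bar>fr \<tau>\<bar>)"
    if t: "t \<in> {0..T}" for t
  proof -
    have "\<bar>LBINT \<tau>=t..T. fl \<tau>\<bar> \<le> (LINT \<tau>:{0..T}|lborel. \<bar>fl \<tau>\<bar>)"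
      by (rule int_sub_le[OF ifl]) (use t in auto)
    moreover have "\<bar>LBINT \<tau>=t..T. fr \<tau>\<bar> \<le> (LINT \<tau>:{0..T}|lborel. \<bar>fr \<tau>\<bar>)"
      by (rule int_sub_le[OF ifr]) (use t in auto)
    moreover have "ls t = -1 - (LBINT \<tau>=t..T. fl \<tau>)" "lr t = 0 - (LBINT \<tau>=t..T. fr \<tau>)"
      using eql eqr t by auto
    ultimately show ?thesis unfolding F_def using h1 h0 by (meson add_mono order.trans add.assoc)
  qed
  have bddA: "bdd_above (F ` {0..T})"
    by (rule bdd_aboveI2[where M="1 + (LINT \<tau>:{0..T}|lborel. \<bar>fl \<tau>\<bar>) + (LINT \<tau>:{0..T}|lborel. \<bar>fr \<tau>\<bar>)"])
       (use bdd in auto)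
  define M where "M = Sup (F ` {0..T})"
  have FM: "F t \<le> M" if "t \<in> {0..T}" for t
    unfolding M_def by (rule cSUP_upper[OF that bddA])
  have M0: "0 \<le> M" using FM[of 0] T unfolding F_def by force
  have fbd: "\<forall>\<tau>\<in>{0..T}. \<bar>fl \<tau>\<bar> \<le> K * M \<and> \<bar>fr \<tau>\<bar> \<le> K * M"
  proof
    fix \<tau> assume t: "\<tau> \<in> {0..T}"
    have "\<bar>fl \<tau>\<bar> \<le> K * F \<tau>" "\<bar>fr \<tau>\<bar> \<le> K * F \<tau>"
      unfolding fl_def fr_def K_def F_def
      by (rule lam_rhs_bound; use bB sr ub t g in auto)+
    moreover have "K * F \<tau> \<le> K * M" using FM[OF t] K0 by (rule mult_left_mono)
    ultimately show "\<bar>fl \<tau>\<bar> \<le> K * M \<and> \<bar>fr \<tau>\<bar> \<le> K * M" by linarith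
  qed
  have KMT: "K * M * T \<le> M / 4"
  proof -
    have "K * M * T = (T * K) * M" by simp
    also have "\<dots> \<le> (1/4) * M" using T M0 unfolding K_def by (intro mult_right_mono) auto
    finally show ?thesis by simp
  qed
  have Fb: "F t \<le> 1 + M / 2" if t: "t \<in> {0..T}" for t
  proof -
    have "\<bar>LBINT \<tau>=t..T. fl \<tau>\<bar> \<le> K * M * T"
      by (rule int_le[OF ifl]) (use fbd t in auto)
    moreover have "\<bar>LBINT \<tau>=t..T. fr \<tau>\<bar> \<le> K * M * T"
      by (rule int_le[OF ifr]) (use fbd t in auto)
    moreover have "ls t = -1 - (LBINT \<tau>=t..T. fl \<tau>)" "lr t = 0 - (LBINT \<tau>=t..T. fr \<tau>)"
      using eql eqr t by auto
    ultimately have "\<bar>ls t\<bar> \<le> 1 + K * M * T" "\<bar>lr t\<bar> \<le> K * M * T" using h1 h0 by blast+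
    thus ?thesis using KMT unfolding F_def by linarith
  qed
  have S: "Sup (F ` {0..T}) \<le> 1 + M / 2"
    by (rule cSUP_least) (use T Fb in auto)
  have "M \<le> 1 + M / 2" using S by (simp only: M_def[symmetric])
  hence M2: "M \<le> 2" by simp
  show ?thesis
  proof
    fix t assume t: "t \<in> {0..T}"
    show "\<bar>ls t\<bar> \<le> 2 \<and> \<bar>lr t\<bar> \<le> 2" using FM[OF t] M2 unfolding F_def by auto
  qed
qed


lemma small_T:
  fixes K L T :: real
  assumes "0 \<le> K" "0 \<le> L" "0 < T" "T < 1 / (4*K + 4*L + 1)"
  shows "T * K \<le> 1/4" "4 * T * L < 1"
proof -
  have pos: "0 < 4*K + 4*L + 1" using assms by simp
  have "T * (4*K + 4*L + 1) < 1" using assms(4) pos by (simp add: field_simps)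
  hence "4 * (T*K) + 4 * (T*L) + T < 1" by (simp add: algebra_simps)
  moreover have "0 \<le> T*K" "0 \<le> T*L" using assms by simp_all
  ultimately show "T * K \<le> 1/4" "4 * T * L < 1" using assms by linarith+
qed

theorem theorem4:
  fixes \<beta> :: "real \<Rightarrow> real" and \<gamma> b c u1max u2max i0 :: real
  assumes "\<gamma> > 0" and "b > 0" and "c > 0" and "u1max > 0" and "u2max > 0"
    and "0 \<le> i0" and "i0 \<le> 1"
    and "\<beta> \<in> borel_measurable borel"
    and "\<exists>B. \<forall>t. 0 \<le> \<beta> t \<and> \<beta> t \<le> B"
  shows "\<exists>T0>0. \<forall>T. 0 < T \<and> T < T0 \<longrightarrow>
           (\<forall>s r ls lr u1 u2 s' r' ls' lr' u1' u2'.
              optimality_system \<beta> \<gamma> b c u1max u2max i0 T s r ls lr u1 u2 \<longrightarrow>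
              optimality_system \<beta> \<gamma> b c u1max u2max i0 T s' r' ls' lr' u1' u2' \<longrightarrow>
              (\<forall>t\<in>{0..T}. s t = s' t \<and> r t = r' t \<and> ls t = ls' t \<and> lr t = lr' t
                          \<and> u1 t = u1' t \<and> u2 t = u2' t))"
proof -
  obtain B where bB: "\<forall>t. 0 \<le> \<beta> t \<and> \<beta> t \<le> B" using assms(9) by blast
  have B0: "0 \<le> B" using bB by (meson order.trans)
  define K where "K = 3*B+u1max+3*u2max+\<gamma>"
  define L where "L = 20 * (B + u1max + u2max + \<gamma> + 1/b + 1/c + 1)"
  have K0: "0 \<le> K" unfolding K_def using B0 assms by simp
  have L0: "0 \<le> L" unfolding L_def using B0 assms by simp
  define T0 where "T0 = 1 / (4*K + 4*L + 1)"
  have T00: "T0 > 0" unfolding T0_def using K0 L0 by simp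
  show ?thesis
  proof (intro exI[of _ T0] conjI T00 allI impI)
    fix T s r ls lr u1 u2 s' r' ls' lr' u1' u2'
    assume TT: "0 < T \<and> T < T0"
      and os1: "optimality_system \<beta> \<gamma> b c u1max u2max i0 T s r ls lr u1 u2"
      and os2: "optimality_system \<beta> \<gamma> b c u1max u2max i0 T s' r' ls' lr' u1' u2'"
    have T: "0 < T" using TT by simp
    have TK: "T * K \<le> 1/4" and TL: "4 * T * L < 1"
      using small_T[OF K0 L0 T] TT unfolding T0_def by auto
    have lb1: "\<forall>t\<in>{0..T}. \<bar>ls t\<bar> \<le> 2 \<and> \<bar>lr t\<bar> \<le> 2"
      by (rule lam_bound[OF os1 assms(1,4,5) bB T]) (use TK in \<open>simp add: K_def\<close>)
    have lb2: "\<forall>t\<in>{0..T}. \<bar>ls' t\<bar> \<le> 2 \<and> \<bar>lr' t\<bar> \<le> 2"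
      by (rule lam_bound[OF os2 assms(1,4,5) bB T]) (use TK in \<open>simp add: K_def\<close>)
    have ub1: "\<forall>t\<in>{0..T}. 0 \<le> u1 t \<and> u1 t \<le> u1max \<and> 0 \<le> u2 t \<and> u2 t \<le> u2max"
      by (rule ctrl_bounds[OF os1 assms(4,5)])
    have ub2: "\<forall>t\<in>{0..T}. 0 \<le> u1' t \<and> u1' t \<le> u1max \<and> 0 \<le> u2' t \<and> u2' t \<le> u2max"
      by (rule ctrl_bounds[OF os2 assms(4,5)])
    have sr1: "\<forall>t\<in>{0..T}. 0 \<le> s t \<and> s t \<le> 1 \<and> 0 \<le> r t \<and> r t \<le> 1"
      using os1 unfolding optimality_system_def by blast
    have sr2: "\<forall>t\<in>{0..T}. 0 \<le> s' t \<and> s' t \<le> 1 \<and> 0 \<le> r' t \<and> r' t \<le> 1"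
      using os2 unfolding optimality_system_def by blast
    have uf1: "\<forall>t\<in>{0..T}. u1 t = min (max (ls t * s t / (- 2 * b)) 0) u1max"
      "\<forall>t\<in>{0..T}. u2 t = min (max (ls t * s t * (1 - 2 * s t - r t) / (- 2 * c)) 0) u2max"
      using os1 unfolding optimality_system_def by blast+
    have uf2: "\<forall>t\<in>{0..T}. u1' t = min (max (ls' t * s' t / (- 2 * b)) 0) u1max"
      "\<forall>t\<in>{0..T}. u2' t = min (max (ls' t * s' t * (1 - 2 * s' t - r' t) / (- 2 * c)) 0) u2max"
      using os2 unfolding optimality_system_def by blast+
    define fs where "fs \<tau> = s_rhs \<beta> \<tau> (s \<tau>) (r \<tau>) (u1 \<tau>) (u2 \<tau>)" for \<tau>
    define fr where "fr \<tau> = r_rhs \<gamma> (s \<tau>) (r \<tau>)" for \<tau>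
    define fl where "fl \<tau> = ls_rhs \<beta> \<gamma> \<tau> (s \<tau>) (r \<tau>) (ls \<tau>) (lr \<tau>) (u1 \<tau>) (u2 \<tau>)" for \<tau>
    define fm where "fm \<tau> = lr_rhs \<beta> \<gamma> \<tau> (s \<tau>) (ls \<tau>) (lr \<tau>) (u2 \<tau>)" for \<tau>
    define fs' where "fs' \<tau> = s_rhs \<beta> \<tau> (s' \<tau>) (r' \<tau>) (u1' \<tau>) (u2' \<tau>)" for \<tau>
    define fr' where "fr' \<tau> = r_rhs \<gamma> (s' \<tau>) (r' \<tau>)" for \<tau>
    define fl' where "fl' \<tau> = ls_rhs \<beta> \<gamma> \<tau> (s' \<tau>) (r' \<tau>) (ls' \<tau>) (lr' \<tau>) (u1' \<tau>) (u2' \<tau>)" for \<tau>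
    define fm' where "fm' \<tau> = lr_rhs \<beta> \<gamma> \<tau> (s' \<tau>) (ls' \<tau>) (lr' \<tau>) (u2' \<tau>)" for \<tau>
    have I1: "set_integrable lborel {0..T} fs" "set_integrable lborel {0..T} fr"
      "set_integrable lborel {0..T} fl" "set_integrable lborel {0..T} fm"
      using os1 unfolding optimality_system_def fs_def fr_def fl_def fm_def by blast+
    have I2: "set_integrable lborel {0..T} fs'" "set_integrable lborel {0..T} fr'"
      "set_integrable lborel {0..T} fl'" "set_integrable lborel {0..T} fm'"
      using os2 unfolding optimality_system_def fs'_def fr'_def fl'_def fm'_def by blast+
    have E1: "\<forall>t\<in>{0..T}. s t = (1 - i0) + (LBINT \<tau>=0..t. fs \<tau>)"
      "\<forall>t\<in>{0..T}. r t = 0 + (LBINT \<tau>=0..t. fr \<tau>)"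
      "\<forall>t\<in>{0..T}. ls t = -1 - (LBINT \<tau>=t..T. fl \<tau>)"
      "\<forall>t\<in>{0..T}. lr t = 0 - (LBINT \<tau>=t..T. fm \<tau>)"
      using os1 unfolding optimality_system_def fs_def fr_def fl_def fm_def by blast+
    have E2: "\<forall>t\<in>{0..T}. s' t = (1 - i0) + (LBINT \<tau>=0..t. fs' \<tau>)"
      "\<forall>t\<in>{0..T}. r' t = 0 + (LBINT \<tau>=0..t. fr' \<tau>)"
      "\<forall>t\<in>{0..T}. ls' t = -1 - (LBINT \<tau>=t..T. fl' \<tau>)"
      "\<forall>t\<in>{0..T}. lr' t = 0 - (LBINT \<tau>=t..T. fm' \<tau>)"
      using os2 unfolding optimality_system_def fs'_def fr'_def fl'_def fm'_def by blast+
    define e where "e t = \<bar>s t - s' t\<bar> + \<bar>r t - r' t\<bar> + \<bar>ls t - ls' t\<bar> + \<bar>lr t - lr' t\<bar>" for t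
    have e10: "e t \<le> 10" if t: "t \<in> {0..T}" for t
    proof -
      have "\<bar>s t - s' t\<bar> \<le> 1" "\<bar>r t - r' t\<bar> \<le> 1" using bspec[OF sr1 t] bspec[OF sr2 t] by (auto simp: abs_le_iff)
      moreover have "\<bar>ls t - ls' t\<bar> \<le> 4" "\<bar>lr t - lr' t\<bar> \<le> 4" using bspec[OF lb1 t] bspec[OF lb2 t] by (auto simp: abs_le_iff)
      ultimately show ?thesis unfolding e_def by linarith
    qed
    have bddA: "bdd_above (e ` {0..T})"
      by (rule bdd_aboveI2[where M=10]) (use e10 in auto)
    define D where "D = Sup (e ` {0..T})"
    have eD: "e t \<le> D" if "t \<in> {0..T}" for t
      unfolding D_def by (rule cSUP_upper[OF that bddA])
    have D0: "0 \<le> D" using eD[of 0] T unfolding e_def by force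
    have lip: "\<bar>fs \<tau> - fs' \<tau>\<bar> \<le> L * D \<and> \<bar>fr \<tau> - fr' \<tau>\<bar> \<le> L * D
       \<and> \<bar>fl \<tau> - fl' \<tau>\<bar> \<le> L * D \<and> \<bar>fm \<tau> - fm' \<tau>\<bar> \<le> L * D" if t: "\<tau> \<in> {0..T}" for \<tau>
    proof -
      have c1: "\<bar>s \<tau> - s' \<tau>\<bar> + \<bar>r \<tau> - r' \<tau>\<bar> + \<bar>ls \<tau> - ls' \<tau>\<bar> \<le> e \<tau>"
        unfolding e_def by simp
      have uu: "u1 \<tau> = min (max (ls \<tau> * s \<tau> / (- 2 * b)) 0) u1max"
        "u1' \<tau> = min (max (ls' \<tau> * s' \<tau> / (- 2 * b)) 0) u1max"
        "u2 \<tau> = min (max (ls \<tau> * s \<tau> * (1 - 2 * s \<tau> - r \<tau>) / (- 2 * c)) 0) u2max"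
        "u2' \<tau> = min (max (ls' \<tau> * s' \<tau> * (1 - 2 * s' \<tau> - r' \<tau>) / (- 2 * c)) 0) u2max"
        using uf1 uf2 t by blast+
      have du: "\<bar>u1 \<tau> - u1' \<tau>\<bar> \<le> (1/b) * e \<tau>"
        unfolding uu(1,2)
        by (rule ctrl_lip(1)) (use bspec[OF sr1 t] bspec[OF sr2 t] bspec[OF lb1 t] bspec[OF lb2 t] c1 assms(2,3) in auto)
      have dv: "\<bar>u2 \<tau> - u2' \<tau>\<bar> \<le> (4/c) * e \<tau>"
        unfolding uu(3,4)
        by (rule ctrl_lip(2)) (use bspec[OF sr1 t] bspec[OF sr2 t] bspec[OF lb1 t] bspec[OF lb2 t] c1 assms(2,3) in auto)
      have "\<bar>fs \<tau> - fs' \<tau>\<bar> \<le> L * e \<tau> \<and> \<bar>fr \<tau> - fr' \<tau>\<bar> \<le> L * e \<tau>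
       \<and> \<bar>fl \<tau> - fl' \<tau>\<bar> \<le> L * e \<tau> \<and> \<bar>fm \<tau> - fm' \<tau>\<bar> \<le> L * e \<tau>"
        unfolding fs_def fr_def fl_def fm_def fs'_def fr'_def fl'_def fm'_def L_def
        by (rule rhs_lip_all) (use bB bspec[OF sr1 t] bspec[OF sr2 t] bspec[OF ub1 t] bspec[OF ub2 t] bspec[OF lb1 t] bspec[OF lb2 t] du dv assms(1-3) e_def in auto)
      moreover have "L * e \<tau> \<le> L * D" using eD[OF t] L0 by (rule mult_left_mono)
      ultimately show ?thesis by linarith
    qed
    have eb: "e t \<le> 4 * (L * D * T)" if t: "t \<in> {0..T}" for t
    proof -
      have a1: "\<bar>(LBINT \<tau>=0..t. fs \<tau>) - (LBINT \<tau>=0..t. fs' \<tau>)\<bar> \<le> L * D * T"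
        by (rule int_diff_le0[OF I1(1) I2(1)]) (use lip t in auto)
      have a2: "\<bar>(LBINT \<tau>=0..t. fr \<tau>) - (LBINT \<tau>=0..t. fr' \<tau>)\<bar> \<le> L * D * T"
        by (rule int_diff_le0[OF I1(2) I2(2)]) (use lip t in auto)
      have a3: "\<bar>(LBINT \<tau>=t..T. fl \<tau>) - (LBINT \<tau>=t..T. fl' \<tau>)\<bar> \<le> L * D * T"
        by (rule int_diff_le[OF I1(3) I2(3)]) (use lip t in auto)
      have a4: "\<bar>(LBINT \<tau>=t..T. fm \<tau>) - (LBINT \<tau>=t..T. fm' \<tau>)\<bar> \<le> L * D * T"
        by (rule int_diff_le[OF I1(4) I2(4)]) (use lip t in auto)
      have "s t - s' t = (LBINT \<tau>=0..t. fs \<tau>) - (LBINT \<tau>=0..t. fs' \<tau>)"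
        "r t - r' t = (LBINT \<tau>=0..t. fr \<tau>) - (LBINT \<tau>=0..t. fr' \<tau>)"
        "ls t - ls' t = - ((LBINT \<tau>=t..T. fl \<tau>) - (LBINT \<tau>=t..T. fl' \<tau>))"
        "lr t - lr' t = - ((LBINT \<tau>=t..T. fm \<tau>) - (LBINT \<tau>=t..T. fm' \<tau>))"
        using E1 E2 t by auto
      hence "\<bar>s t - s' t\<bar> \<le> L * D * T" "\<bar>r t - r' t\<bar> \<le> L * D * T"
        "\<bar>ls t - ls' t\<bar> \<le> L * D * T" "\<bar>lr t - lr' t\<bar> \<le> L * D * T"
        using a1 a2 a3 a4 by simp_all
      thus ?thesis unfolding e_def by linarith
    qed
    have S: "Sup (e ` {0..T}) \<le> 4 * (L * D * T)"
      by (rule cSUP_least) (use T eb in auto)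
    have DD: "D \<le> (4 * T * L) * D" using S by (simp only: D_def[symmetric]) (simp add: algebra_simps)
    have Dz: "D = 0"
    proof (rule ccontr)
      assume "D \<noteq> 0" hence "0 < D" using D0 by simp
      hence "(4 * T * L) * D < 1 * D" using TL by (intro mult_strict_right_mono) auto
      thus False using DD by simp
    qed
    show "\<forall>t\<in>{0..T}. s t = s' t \<and> r t = r' t \<and> ls t = ls' t \<and> lr t = lr' t
                          \<and> u1 t = u1' t \<and> u2 t = u2' t"
    proof
      fix t assume t: "t \<in> {0..T}"
      have "e t \<le> 0" using eD[OF t] Dz by simp
      hence eq: "s t = s' t" "r t = r' t" "ls t = ls' t" "lr t = lr' t" unfolding e_def
        by (smt (verit) abs_ge_zero)+
      moreover have "u1 t = u1' t" "u2 t = u2' t" using uf1 uf2 t eq by auto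
      ultimately show "s t = s' t \<and> r t = r' t \<and> ls t = ls' t \<and> lr t = lr' t
                          \<and> u1 t = u1' t \<and> u2 t = u2' t" by simp
    qed
  qed
qed


end
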